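(* Let $U=U_1\times\cdots\times U_m\subset\mathbb{R}^m_+$ be a convex set with each $U_i\subseteq\mathbb{R}$, let $C\subseteq\mathbb{R}^m$ be a set, and let $\overline{U}=U\cap C$. Let $c\in\mathbb{R}^{n_1}$, $d\in\mathbb{R}^{n_2}$, and $a_i\in\mathbb{R}^{n_1}$, $g_i\in\mathbb{R}^{n_2}$ for $i\in[m]$. Define $$z_{\rm ro}=\inf_{x\in\mathbb{R}^{n_1},\,y\in\mathbb{R}^{n_2}}\{c^Tx+d^Ty:\ a_i^Tx+g_i^Ty\ge u_i\ \ \forall u\in U,\ \forall i\in[m]\},$$ $$z_{\rm cp}=\inf_{x\in\mathbb{R}^{n_1},\,y\in\mathbb{R}^{n_2}}\{c^Tx+d^Ty:\ a_i^Tx+g_i^Ty\ge u_i\ \ \forall u\in \overline{U},\ \forall i\in[m]\}.$$ Let $\rho_{\rm ro}=\rho\big(U^\downarrow,\Pi(\overline{U}^\downarrow)\big)$ and $\gamma_{\rm ro}=\gamma\big(U^\downarrow,\Pi(\overline{U}^\downarrow)\big)$. If $0<z_{\rm cp}\le z_{\rm ro}<\infty$, then $$\rho_{\rm ro}\le \frac{z_{\rm cp}}{z_{\rm ro}}\le \gamma_{\rm ro}.$$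
   Context: $[m]=\{1,\dots,m\}$. For $S\subseteq\mathbb{R}^m_+$, the down-hull is $S^\downarrow=\{t\in\mathbb{R}^m_+:\exists s\in S,\ t\le s\text{ componentwise}\}$. For $S\subseteq\mathbb{R}^m$, $\Pi_i(S)=\{u_i:\exists u\in S\text{ whose $i$-th coordinate is }u_i\}$ and $\Pi(S)=\Pi_1(S)\times\cdots\times\Pi_m(S)$. For a set $S$ and $r\ge0$, $rS=\{rx:x\in S\}$. For sets $S_1,S_2$: $\rho(S_1,S_2)=\max\{\rho\ge 0:\rho S_1\subseteq S_2\}$ and $\gamma(S_1,S_2)=\min\{\gamma\ge0: S_2\subseteq \gamma S_1\}$. *)

theory Defs
  imports "HOL-Analysis.Analysis"
begin

definition down_hull :: "(real^'m) set \<Rightarrow> (real^'m) set" where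
  "down_hull S = {t. (\<forall>i. 0 \<le> t$i) \<and> (\<exists>s\<in>S. \<forall>i. t$i \<le> s$i)}"

definition proj_coord :: "'m \<Rightarrow> (real^'m) set \<Rightarrow> real set" where
  "proj_coord i S = {u$i | u. u \<in> S}"

definition proj_box :: "(real^'m) set \<Rightarrow> (real^'m) set" where
  "proj_box S = {u. \<forall>i. u$i \<in> proj_coord i S}"

text \<open>rho(S1,S2) = max{rho >= 0 : rho S1 subseteq S2}, gamma(S1,S2) = min{gamma >= 0 : S2 subseteq gamma S1};
  rendered as Sup / Inf in the extended reals (they coincide with max / min whenever these exist).\<close>
definition rho_fac :: "(real^'m) set \<Rightarrow> (real^'m) set \<Rightarrow> ereal" where
  "rho_fac S1 S2 = Sup {ereal r | r. r \<ge> 0 \<and> (\<lambda>x. r *\<^sub>R x) ` S1 \<subseteq> S2}"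

definition gamma_fac :: "(real^'m) set \<Rightarrow> (real^'m) set \<Rightarrow> ereal" where
  "gamma_fac S1 S2 = Inf {ereal g | g. g \<ge> 0 \<and> S2 \<subseteq> (\<lambda>x. g *\<^sub>R x) ` S1}"

definition robust_val ::
  "real^'n1 \<Rightarrow> real^'n2 \<Rightarrow> ('m \<Rightarrow> real^'n1) \<Rightarrow> ('m \<Rightarrow> real^'n2) \<Rightarrow> (real^'m) set \<Rightarrow> ereal" where
  "robust_val c d a g S =
     Inf ((\<lambda>(x, y). ereal (c \<bullet> x + d \<bullet> y)) `
          {(x, y). \<forall>u\<in>S. \<forall>i. a i \<bullet> x + g i \<bullet> y \<ge> u$i})"

end

theory Submission
  imports Defs
begin

definition feas :: "('m \<Rightarrow> real^'n1) \<Rightarrow> ('m \<Rightarrow> real^'n2) \<Rightarrow> (real^'m) set \<Rightarrow> ((real^'n1) \<times> (real^'n2)) set" where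
  "feas a g S = {(x, y). \<forall>u\<in>S. \<forall>i. a i \<bullet> x + g i \<bullet> y \<ge> u$i}"

lemma rv_le: "(x, y) \<in> feas a g S \<Longrightarrow> robust_val c d a g S \<le> ereal (c \<bullet> x + d \<bullet> y)"
  unfolding robust_val_def feas_def
  by (rule Inf_lower) (auto intro!: image_eqI[where x="(x,y)"])

lemma rv_ge: "(\<And>x y. (x, y) \<in> feas a g S \<Longrightarrow> z \<le> ereal (c \<bullet> x + d \<bullet> y)) \<Longrightarrow> z \<le> robust_val c d a g S"
  unfolding robust_val_def feas_def
  by (rule Inf_greatest) auto

lemma rv_nonempty: "robust_val c d a g S < \<infinity> \<Longrightarrow> \<exists>x y. (x, y) \<in> feas a g S"
proof (rule ccontr)
  assume h: "robust_val c d a g S < \<infinity>" "\<not> (\<exists>x y. (x, y) \<in> feas a g S)"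
  then have "feas a g S = {}" by auto
  then have "robust_val c d a g S = \<infinity>" unfolding robust_val_def feas_def[symmetric] by (simp add: top_ereal_def)
  then show False using h by simp
qed

theorem theorem1:
  fixes U C :: "(real^'m) set"
    and Ucomp :: "'m \<Rightarrow> real set"
    and c :: "real^'n1" and d :: "real^'n2"
    and a :: "'m \<Rightarrow> real^'n1" and g :: "'m \<Rightarrow> real^'n2"
  assumes U_prod: "U = {u. \<forall>i. u$i \<in> Ucomp i}"
    and U_nonneg: "\<forall>u\<in>U. \<forall>i. 0 \<le> u$i"
    and U_convex: "convex U"
    and pos: "0 < robust_val c d a g (U \<inter> C)"
    and le: "robust_val c d a g (U \<inter> C) \<le> robust_val c d a g U"
    and fin: "robust_val c d a g U < \<infinity>"
  shows "rho_fac (down_hull U) (proj_box (down_hull (U \<inter> C)))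
           \<le> robust_val c d a g (U \<inter> C) / robust_val c d a g U
       \<and> robust_val c d a g (U \<inter> C) / robust_val c d a g U
           \<le> gamma_fac (down_hull U) (proj_box (down_hull (U \<inter> C)))"
proof -
  obtain q where q: "robust_val c d a g U = ereal q"
    using fin pos le by (cases "robust_val c d a g U") auto
  obtain p where p: "robust_val c d a g (U \<inter> C) = ereal p"
    using fin pos le q by (cases "robust_val c d a g (U \<inter> C)") auto
  have p0: "p > 0" using pos p by simp
  have pq: "p \<le> q" using le p q by simp
  have q0: "q > 0" using p0 pq by simp
  have div: "ereal p / ereal q = ereal (p / q)" using q0 by simp
  obtain x0 y0 where f0: "(x0, y0) \<in> feas a g U" using rv_nonempty[OF fin] by blast
  have rho: "rho_fac (down_hull U) (proj_box (down_hull (U \<inter> C))) \<le> ereal (p / q)"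
    unfolding rho_fac_def
  proof (rule Sup_least, clarify)
    fix r assume r0: "0 \<le> r"
      and sub: "(\<lambda>x. r *\<^sub>R x) ` down_hull U \<subseteq> proj_box (down_hull (U \<inter> C))"
    show "ereal r \<le> ereal (p / q)"
    proof (cases "r = 0")
      case True then show ?thesis using p0 q0 by simp
    next
      case False
      then have rp: "r > 0" using r0 by simp
      have "ereal (r * q) \<le> robust_val c d a g (U \<inter> C)"
      proof (rule rv_ge)
        fix x y assume xy: "(x, y) \<in> feas a g (U \<inter> C)"
        have "((1/r) *\<^sub>R x, (1/r) *\<^sub>R y) \<in> feas a g U"
          unfolding feas_def
        proof (clarify)
          fix u i assume uU: "u \<in> U"
          have "u \<in> down_hull U" using uU U_nonneg unfolding down_hull_def by auto
          then have "r *\<^sub>R u \<in> proj_box (down_hull (U \<inter> C))" using sub by blast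
          then have "r * u$i \<in> proj_coord i (down_hull (U \<inter> C))"
            unfolding proj_box_def by auto
          then obtain t where t: "t \<in> down_hull (U \<inter> C)" "t$i = r * u$i"
            unfolding proj_coord_def by auto
          then obtain s where s: "s \<in> U \<inter> C" "t$i \<le> s$i" unfolding down_hull_def by blast
          have "s$i \<le> a i \<bullet> x + g i \<bullet> y" using xy s(1) unfolding feas_def by auto
          then have "r * u$i \<le> a i \<bullet> x + g i \<bullet> y" using t s by simp
          then have "u$i \<le> (a i \<bullet> x + g i \<bullet> y) / r" using rp by (simp add: field_simps)
          then show "u$i \<le> a i \<bullet> ((1/r) *\<^sub>R x) + g i \<bullet> ((1/r) *\<^sub>R y)"
            by (simp add: inner_scaleR_right add_divide_distrib)
        qed
        from rv_le[OF this, of c d] q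
        have "q \<le> c \<bullet> ((1/r) *\<^sub>R x) + d \<bullet> ((1/r) *\<^sub>R y)" by simp
        then have "q \<le> (c \<bullet> x + d \<bullet> y) / r" by (simp add: inner_scaleR_right add_divide_distrib)
        then show "ereal (r * q) \<le> ereal (c \<bullet> x + d \<bullet> y)" using rp by (simp add: field_simps)
      qed
      then have "r * q \<le> p" using p by simp
      then show ?thesis using q0 by (simp add: field_simps)
    qed
  qed
  have gam: "ereal (p / q) \<le> gamma_fac (down_hull U) (proj_box (down_hull (U \<inter> C)))"
    unfolding gamma_fac_def
  proof (rule Inf_greatest, clarify)
    fix r assume r0: "0 \<le> r"
      and sub: "proj_box (down_hull (U \<inter> C)) \<subseteq> (\<lambda>x. r *\<^sub>R x) ` down_hull U"
    have key: "p \<le> r * (c \<bullet> x + d \<bullet> y)" if xy: "(x, y) \<in> feas a g U" for x y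
    proof -
      have "(r *\<^sub>R x, r *\<^sub>R y) \<in> feas a g (U \<inter> C)"
        unfolding feas_def
      proof (clarify)
        fix u i assume uU: "u \<in> U" "u \<in> C"
        have "u \<in> down_hull (U \<inter> C)" using uU U_nonneg unfolding down_hull_def by auto
        then have "u \<in> proj_box (down_hull (U \<inter> C))"
          unfolding proj_box_def proj_coord_def by auto
        then obtain w where w: "w \<in> down_hull U" "u = r *\<^sub>R w" using sub by blast
        then obtain s where s: "s \<in> U" "w$i \<le> s$i" unfolding down_hull_def by auto
        have "s$i \<le> a i \<bullet> x + g i \<bullet> y" using xy s(1) unfolding feas_def by auto
        then have "r * w$i \<le> r * (a i \<bullet> x + g i \<bullet> y)"
          using s(2) r0 by (meson mult_left_mono order_trans)
        then show "u$i \<le> a i \<bullet> (r *\<^sub>R x) + g i \<bullet> (r *\<^sub>R y)"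
          using w by (simp add: inner_scaleR_right distrib_left)
      qed
      from rv_le[OF this, of c d] p show ?thesis
        by (simp add: inner_scaleR_right distrib_left)
    qed
    show "ereal (p / q) \<le> ereal r"
    proof (cases "r = 0")
      case True then show ?thesis using key[OF f0] p0 by simp
    next
      case False
      then have rp: "r > 0" using r0 by simp
      have "ereal (p / r) \<le> robust_val c d a g U"
      proof (rule rv_ge)
        fix x y assume "(x, y) \<in> feas a g U"
        from key[OF this] rp show "ereal (p / r) \<le> ereal (c \<bullet> x + d \<bullet> y)"
          by (simp add: field_simps)
      qed
      then have "p / r \<le> q" using q by simp
      then show ?thesis using q0 rp by (simp add: field_simps)
    qed
  qed
  show ?thesis using rho gam p q div by simp
qed

end
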